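(* Let $Y$ be a real random variable and $\boldsymbol\kappa:\mathbb R\to\mathbb R^p$ a nonzero continuous function such that (i) $\sup_{\|\boldsymbol\beta\|=1}\mathbb E[|\langle\boldsymbol\kappa(Y),\boldsymbol\beta\rangle|^\ell]\le c_1$ for some $\ell>2$ and $c_1>0$, and (ii) $Y$ is a continuous random variable. Let $d'=\dim\mathrm{span}\{\boldsymbol\kappa(y):y\in\mathbb R\}$. Then for every $\tau>1$ there exists $K=K(\tau,d')\ge d'$ such that $\boldsymbol\kappa$ is weak $(K,\tau)$-sliced stable w.r.t. $Y$.
   Context: Fix a small constant $\gamma\in(0,1)$. Weak $(K,\tau)$-sliced stability of a continuous curve $\boldsymbol\kappa$ w.r.t. $Y$: for every $H\ge K$ and every partition $-\infty=a_0<\dots<a_H=\infty$ with $\frac{1-\gamma}{H}\le\mathbb P(a_h\le Y\le a_{h+1})\le\frac{1+\gamma}{H}$ for all $h$, $\frac1H\sum_h\mathrm{var}(\boldsymbol\beta^\top\boldsymbol\kappa(Y)\mid a_h\le Y\le a_{h+1})\le\frac1\tau\mathrm{var}(\boldsymbol\beta^\top\boldsymbol\kappa(Y))$ for all unit $\boldsymbol\beta\in\mathbb R^p$. *)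

theory Defs
  imports "HOL-Probability.Probability"
begin

definition cond_mean_event :: "'a measure \<Rightarrow> ('a \<Rightarrow> real) \<Rightarrow> 'a set \<Rightarrow> real" where
  "cond_mean_event M Z A = (\<integral>x. indicator A x * Z x \<partial>M) / measure M A"

definition cond_var_event :: "'a measure \<Rightarrow> ('a \<Rightarrow> real) \<Rightarrow> 'a set \<Rightarrow> real" where
  "cond_var_event M Z A =
     (\<integral>x. indicator A x * (Z x - cond_mean_event M Z A)^2 \<partial>M) / measure M A"

definition slice_event :: "'a measure \<Rightarrow> ('a \<Rightarrow> real) \<Rightarrow> (nat \<Rightarrow> ereal) \<Rightarrow> nat \<Rightarrow> 'a set" where
  "slice_event M Y a h = {x \<in> space M. a h \<le> ereal (Y x) \<and> ereal (Y x) \<le> a (Suc h)}"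

definition weak_sliced_stable ::
  "real \<Rightarrow> 'a measure \<Rightarrow> ('a \<Rightarrow> real) \<Rightarrow> (real \<Rightarrow> real ^ 'p) \<Rightarrow> nat \<Rightarrow> real \<Rightarrow> bool" where
  "weak_sliced_stable \<gamma> M Y \<kappa> K \<tau> \<longleftrightarrow>
     (\<forall>H::nat. \<forall>a::nat \<Rightarrow> ereal.
        H \<ge> K \<and> a 0 = -\<infinity> \<and> a H = \<infinity> \<and> (\<forall>h<H. a h < a (Suc h)) \<and>
        (\<forall>h<H. (1 - \<gamma>) / real H \<le> measure M (slice_event M Y a h) \<and>
                measure M (slice_event M Y a h) \<le> (1 + \<gamma>) / real H)
        \<longrightarrow> (\<forall>\<beta>::real ^ 'p. norm \<beta> = 1 \<longrightarrow>
              (1 / real H) * (\<Sum>h<H. cond_var_event M (\<lambda>x. \<beta> \<bullet> \<kappa> (Y x)) (slice_event M Y a h))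
              \<le> (1 / \<tau>) * prob_space.variance M (\<lambda>x. \<beta> \<bullet> \<kappa> (Y x))))"

end

theory Submission
  imports Defs
begin


context prob_space begin

lemma integrable_from_sq:
  fixes Z :: "'a \<Rightarrow> real"
  assumes Zm: "Z \<in> borel_measurable M" and Z2: "integrable M (\<lambda>x. (Z x)\<^sup>2)"
  shows "integrable M Z"
proof (rule Bochner_Integration.integrable_bound[OF _ Zm])
  show "integrable M (\<lambda>x. 1 + (Z x)\<^sup>2)" using Z2 by simp
  show "AE x in M. norm (Z x) \<le> norm (1 + (Z x)\<^sup>2)"
  proof (rule AE_I2)
    fix x
    have e: "(\<bar>Z x\<bar> - 1)\<^sup>2 = (Z x)\<^sup>2 - 2*\<bar>Z x\<bar> + 1"
      by (simp add: power2_eq_square algebra_simps)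
    have "0 \<le> (\<bar>Z x\<bar> - 1)\<^sup>2" by simp
    then have "\<bar>Z x\<bar> \<le> 1 + (Z x)\<^sup>2" unfolding e using zero_le_power2[of "Z x"] by linarith
    then show "norm (Z x) \<le> norm (1 + (Z x)\<^sup>2)" by simp
  qed
qed

lemma integral_ind_sq_expand:
  fixes Z :: "'a \<Rightarrow> real"
  assumes A: "A \<in> sets M" and Zm: "Z \<in> borel_measurable M" and Z2: "integrable M (\<lambda>x. (Z x)\<^sup>2)"
  shows "(\<integral>x. indicator A x * (Z x - t)\<^sup>2 \<partial>M) =
     (\<integral>x. indicator A x * (Z x)\<^sup>2 \<partial>M) - 2 * t * (\<integral>x. indicator A x * Z x \<partial>M) + t\<^sup>2 * measure M A"
proof -
  have Z: "integrable M Z" by (rule integrable_from_sq[OF Zm Z2])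
  have i1: "integrable M (\<lambda>x. indicator A x * (Z x)\<^sup>2)"
    using integrable_real_mult_indicator[OF A Z2] by (simp add: mult.commute)
  have i2: "integrable M (\<lambda>x. indicator A x * Z x)"
    using integrable_real_mult_indicator[OF A Z] by (simp add: mult.commute)
  have i3: "integrable M (\<lambda>x. indicator A x :: real)"
    using A by (intro integrable_real_indicator) (auto simp: emeasure_eq_measure)
  have eq: "(\<lambda>x. indicator A x * (Z x - t)\<^sup>2) = (\<lambda>x. indicator A x * (Z x)\<^sup>2 - 2 * t * (indicator A x * Z x) + t\<^sup>2 * indicator A x)"
    by (auto simp: power2_eq_square algebra_simps)
  show ?thesis
    unfolding eq using i1 i2 i3 A by (simp add: integral_mult_right_zero)
qed

lemma cond_var_le:
  fixes Z :: "'a \<Rightarrow> real"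
  assumes A: "A \<in> sets M" and pA: "measure M A > 0"
   and Zm: "Z \<in> borel_measurable M" and Z2: "integrable M (\<lambda>x. (Z x)\<^sup>2)"
  shows "cond_var_event M Z A \<le> (\<integral>x. indicator A x * (Z x - c)\<^sup>2 \<partial>M) / measure M A"
proof -
  define I2 where "I2 = (\<integral>x. indicator A x * (Z x)\<^sup>2 \<partial>M)"
  define I1 where "I1 = (\<integral>x. indicator A x * Z x \<partial>M)"
  define p where "p = measure M A"
  define m where "m = cond_mean_event M Z A"
  have m: "m = I1 / p" unfolding m_def cond_mean_event_def I1_def p_def ..
  have "cond_var_event M Z A = (I2 - 2 * m * I1 + m\<^sup>2 * p) / p"
    unfolding cond_var_event_def m_def[symmetric] I2_def I1_def p_def
    using integral_ind_sq_expand[OF A Zm Z2] by simp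
  moreover have "(\<integral>x. indicator A x * (Z x - c)\<^sup>2 \<partial>M) = I2 - 2 * c * I1 + c\<^sup>2 * p"
    unfolding I2_def I1_def p_def using integral_ind_sq_expand[OF A Zm Z2] by simp
  moreover have "I2 - 2 * m * I1 + m\<^sup>2 * p \<le> I2 - 2 * c * I1 + c\<^sup>2 * p"
  proof -
    have p: "p > 0" using pA p_def by simp
    have I1: "I1 = m * p" using m p by simp
    have "0 \<le> p * (m - c)\<^sup>2" using p by simp
    then show ?thesis unfolding I1 by (simp add: power2_eq_square algebra_simps)
  qed
  ultimately show ?thesis using pA p_def by (simp add: divide_right_mono)
qed

end


lemma sq_le_powr:
  fixes z l :: real assumes "l \<ge> 2"
  shows "z\<^sup>2 \<le> 1 + \<bar>z\<bar> powr l"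
proof (cases "\<bar>z\<bar> \<le> 1")
  case True
  then have "\<bar>z\<bar> * \<bar>z\<bar> \<le> 1" by (intro mult_le_one) auto
  then have "z\<^sup>2 \<le> 1" by (simp add: power2_eq_square)
  then show ?thesis by (smt (verit) powr_ge_zero)
next
  case False
  then have "\<bar>z\<bar> powr 2 \<le> \<bar>z\<bar> powr l" using assms by (intro powr_mono) auto
  moreover have "\<bar>z\<bar> powr 2 = z\<^sup>2" using False by (simp add: powr_numeral)
  ultimately show ?thesis by simp
qed

lemma norm_diff_sq_le: "(norm (a - b :: 'b::real_normed_vector))\<^sup>2 \<le> 2 * (norm a)\<^sup>2 + 2 * (norm b)\<^sup>2"
proof -
  have "norm (a - b) \<le> norm a + norm b" by (rule norm_triangle_ineq4)
  then have "(norm (a - b))\<^sup>2 \<le> (norm a + norm b)\<^sup>2" by (intro power_mono) auto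
  also have "\<dots> \<le> 2 * (norm a)\<^sup>2 + 2 * (norm b)\<^sup>2"
    using zero_le_power2[of "norm a - norm b"] by (simp add: power2_eq_square algebra_simps)
  finally show ?thesis .
qed

lemma inner_sq_le: "(\<beta> \<bullet> w)\<^sup>2 \<le> (norm \<beta>)\<^sup>2 * (norm (w::'b::real_inner))\<^sup>2"
proof -
  have "\<bar>\<beta> \<bullet> w\<bar> \<le> norm \<beta> * norm w" by (rule Cauchy_Schwarz_ineq2)
  then have "\<bar>\<beta> \<bullet> w\<bar>\<^sup>2 \<le> (norm \<beta> * norm w)\<^sup>2" by (intro power_mono) auto
  then show ?thesis by (simp add: power_mult_distrib)
qed

locale kset = prob_space M for M :: "'a measure" +
  fixes Y :: "'a \<Rightarrow> real" and \<kappa> :: "real \<Rightarrow> real ^ 'p" and l :: real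
  assumes Ym: "Y \<in> borel_measurable M" and kc: "continuous_on UNIV \<kappa>"
  and l2: "l > 2"
  and mom: "\<And>\<beta>. norm \<beta> = 1 \<Longrightarrow> integrable M (\<lambda>x. \<bar>\<kappa> (Y x) \<bullet> \<beta>\<bar> powr l)"
begin

lemma kY_meas[measurable]: "(\<lambda>x. \<kappa> (Y x)) \<in> borel_measurable M"
  using measurable_compose[OF Ym borel_measurable_continuous_onI[OF kc]] by (simp add: o_def)

lemma Y_meas[measurable]: "Y \<in> borel_measurable M" by (rule Ym)

lemma comp_meas[measurable]: "(\<lambda>x. \<kappa> (Y x) $ i) \<in> borel_measurable M"
proof -
  have "(\<lambda>x. \<kappa> (Y x) $ i) = (\<lambda>x. \<kappa> (Y x) \<bullet> axis i 1)" by (simp add: inner_axis)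
  also have "\<dots> \<in> borel_measurable M" by measurable
  finally show ?thesis .
qed

lemma comp_sq_int: "integrable M (\<lambda>x. (\<kappa> (Y x) $ i)\<^sup>2)"
proof (rule Bochner_Integration.integrable_bound)
  have n: "norm (axis i (1::real)) = 1" by simp
  show "integrable M (\<lambda>x. 1 + \<bar>\<kappa> (Y x) \<bullet> axis i 1\<bar> powr l)"
    using mom[OF n] by simp
  show "(\<lambda>x. (\<kappa> (Y x) $ i)\<^sup>2) \<in> borel_measurable M" by measurable
  show "AE x in M. norm ((\<kappa> (Y x) $ i)\<^sup>2) \<le> norm (1 + \<bar>\<kappa> (Y x) \<bullet> axis i 1\<bar> powr l)"
  proof (rule AE_I2)
    fix x
    have "(\<kappa> (Y x) $ i)\<^sup>2 \<le> 1 + \<bar>\<kappa> (Y x) $ i\<bar> powr l" using l2 by (intro sq_le_powr) auto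
    then show "norm ((\<kappa> (Y x) $ i)\<^sup>2) \<le> norm (1 + \<bar>\<kappa> (Y x) \<bullet> axis i 1\<bar> powr l)"
      by (simp add: inner_axis)
  qed
qed

lemma f_int: "integrable M (\<lambda>x. (norm (\<kappa> (Y x)))\<^sup>2)"
proof -
  have "(\<lambda>x. (norm (\<kappa> (Y x)))\<^sup>2) = (\<lambda>x. \<Sum>i\<in>UNIV. (\<kappa> (Y x) $ i)\<^sup>2)"
    unfolding power2_norm_eq_inner inner_vec_def by (simp add: power2_eq_square)
  then show ?thesis using comp_sq_int by simp
qed

lemma diff_sq_int: "integrable M (\<lambda>x. (norm (\<kappa> (Y x) - v))\<^sup>2)"
proof (rule Bochner_Integration.integrable_bound)
  show "integrable M (\<lambda>x. 2 * (norm (\<kappa> (Y x)))\<^sup>2 + 2 * (norm v)\<^sup>2)"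
    using f_int by simp
  show "(\<lambda>x. (norm (\<kappa> (Y x) - v))\<^sup>2) \<in> borel_measurable M" by measurable
  show "AE x in M. norm ((norm (\<kappa> (Y x) - v))\<^sup>2) \<le> norm (2 * (norm (\<kappa> (Y x)))\<^sup>2 + 2 * (norm v)\<^sup>2)"
    using norm_diff_sq_le[of "\<kappa> (Y _)" v] by auto
qed

lemma inner_sq_int: "integrable M (\<lambda>x. (\<beta> \<bullet> (\<kappa> (Y x) - v))\<^sup>2)"
proof (rule Bochner_Integration.integrable_bound)
  show "integrable M (\<lambda>x. (norm \<beta>)\<^sup>2 * (norm (\<kappa> (Y x) - v))\<^sup>2)"
    using diff_sq_int by simp
  show "(\<lambda>x. (\<beta> \<bullet> (\<kappa> (Y x) - v))\<^sup>2) \<in> borel_measurable M" by measurable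
  show "AE x in M. norm ((\<beta> \<bullet> (\<kappa> (Y x) - v))\<^sup>2) \<le> norm ((norm \<beta>)\<^sup>2 * (norm (\<kappa> (Y x) - v))\<^sup>2)"
    using inner_sq_le[of \<beta> "\<kappa> (Y _) - v"] by auto
qed

lemma Zb_sq_int: "integrable M (\<lambda>x. (\<beta> \<bullet> \<kappa> (Y x))\<^sup>2)"
  using inner_sq_int[of \<beta> 0] by simp

end


lemma part_le:
  fixes a :: "nat \<Rightarrow> ereal"
  assumes inc: "\<forall>h<H. a h < a (Suc h)" and ij: "i \<le> j" and jH: "j \<le> H"
  shows "a i \<le> a j"
  using ij jH
proof (induction j rule: dec_induct)
  case base then show ?case by simp
next
  case (step n)
  then have "a i \<le> a n" by simp
  also have "a n < a (Suc n)" using inc step by simp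
  finally show ?case by simp
qed

lemma card_le_2_succ:
  fixes S :: "nat set"
  assumes fin: "finite S" and succ: "\<And>h h'. h \<in> S \<Longrightarrow> h' \<in> S \<Longrightarrow> h < h' \<Longrightarrow> h' = Suc h"
  shows "card S \<le> 2"
proof (cases "S = {}")
  case True then show ?thesis by simp
next
  case False
  define m where "m = Min S"
  have mS: "m \<in> S" using fin False m_def by simp
  have "S \<subseteq> {m, Suc m}"
  proof
    fix h assume h: "h \<in> S"
    then have "m \<le> h" using fin m_def by simp
    then show "h \<in> {m, Suc m}" using succ[OF mS h] by (cases "m = h") auto
  qed
  then have "card S \<le> card {m, Suc m}" by (intro card_mono) auto
  also have "\<dots> \<le> 2" by (simp add: card_insert_le_m1)
  finally show ?thesis .
qed

lemma card_le_1_none: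
  fixes S :: "nat set"
  assumes fin: "finite S" and none: "\<And>h h'. h \<in> S \<Longrightarrow> h' \<in> S \<Longrightarrow> h < h' \<Longrightarrow> False"
  shows "card S \<le> 1"
proof (cases "S = {}")
  case True then show ?thesis by simp
next
  case False
  define m where "m = Min S"
  have mS: "m \<in> S" using fin False m_def by simp
  have "S \<subseteq> {m}"
  proof
    fix h assume h: "h \<in> S"
    then have "m \<le> h" using fin m_def by simp
    then show "h \<in> {m}" using none[OF mS h] by (cases "m = h") auto
  qed
  then have "card S \<le> card {m}" by (intro card_mono) auto
  then show ?thesis by simp
qed

lemma overlap_card:
  fixes a :: "nat \<Rightarrow> ereal"
  assumes inc: "\<forall>h<H. a h < a (Suc h)"
  shows "card {h. h < H \<and> a h \<le> ereal y \<and> ereal y \<le> a (Suc h)} \<le> 2"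
proof (rule card_le_2_succ)
  fix h h' assume h: "h \<in> {h. h < H \<and> a h \<le> ereal y \<and> ereal y \<le> a (Suc h)}"
    and h': "h' \<in> {h. h < H \<and> a h \<le> ereal y \<and> ereal y \<le> a (Suc h)}" and lt: "h < h'"
  show "h' = Suc h"
  proof (rule ccontr)
    assume "h' \<noteq> Suc h"
    then have "Suc (Suc h) \<le> h'" using lt by simp
    then have "a (Suc (Suc h)) \<le> a h'" using h' by (intro part_le[OF inc]) auto
    moreover have "a (Suc h) < a (Suc (Suc h))" using inc h' \<open>Suc (Suc h) \<le> h'\<close> by simp
    moreover have "a h' \<le> ereal y" "ereal y \<le> a (Suc h)" using h h' by auto
    ultimately have "a (Suc h) < a (Suc h)" by (meson order.strict_trans2 order_trans)
    then show False by simp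
  qed
qed auto

lemma cross_lo_card:
  fixes a :: "nat \<Rightarrow> ereal"
  assumes inc: "\<forall>h<H. a h < a (Suc h)"
  shows "card {h. h < H \<and> a h < t \<and> t \<le> a (Suc h)} \<le> 1"
proof (rule card_le_1_none)
  fix h h' assume h: "h \<in> {h. h < H \<and> a h < t \<and> t \<le> a (Suc h)}"
    and h': "h' \<in> {h. h < H \<and> a h < t \<and> t \<le> a (Suc h)}" and lt: "h < h'"
  have "a (Suc h) \<le> a h'" using h' lt by (intro part_le[OF inc]) auto
  then show False using h h' by auto
qed auto

lemma cross_hi_card:
  fixes a :: "nat \<Rightarrow> ereal"
  assumes inc: "\<forall>h<H. a h < a (Suc h)"
  shows "card {h. h < H \<and> a h \<le> t \<and> t < a (Suc h)} \<le> 1"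
proof (rule card_le_1_none)
  fix h h' assume h: "h \<in> {h. h < H \<and> a h \<le> t \<and> t < a (Suc h)}"
    and h': "h' \<in> {h. h < H \<and> a h \<le> t \<and> t < a (Suc h)}" and lt: "h < h'"
  have "a (Suc h) \<le> a h'" using h' lt by (intro part_le[OF inc]) auto
  then show False using h h' by auto
qed auto

definition clampR :: "real \<Rightarrow> ereal \<Rightarrow> real" where
  "clampR R t = (if t \<le> ereal (-R) then -R else if ereal R \<le> t then R else real_of_ereal t)"

lemma clampR_range: "R \<ge> 0 \<Longrightarrow> -R \<le> clampR R t \<and> clampR R t \<le> R"
  by (cases t) (auto simp: clampR_def)

lemma clampR_mono: "R \<ge> 0 \<Longrightarrow> t \<le> t' \<Longrightarrow> clampR R t \<le> clampR R t'"
  by (cases t; cases t') (auto simp: clampR_def)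

lemma clampR_le: "-R \<le> y \<Longrightarrow> y \<le> R \<Longrightarrow> t \<le> ereal y \<Longrightarrow> clampR R t \<le> y"
  by (cases t) (auto simp: clampR_def)

lemma clampR_ge: "-R \<le> y \<Longrightarrow> y \<le> R \<Longrightarrow> ereal y \<le> t \<Longrightarrow> y \<le> clampR R t"
  by (cases t) (auto simp: clampR_def)

lemma clampR_minf: "R \<ge> 0 \<Longrightarrow> clampR R (-\<infinity>) = -R"
  by (auto simp: clampR_def)

lemma clampR_inf: "R \<ge> 0 \<Longrightarrow> clampR R \<infinity> = R"
  by (auto simp: clampR_def)

context kset begin

lemma slice_sets[measurable]: "slice_event M Y a h \<in> sets M"
  unfolding slice_event_def by measurable

lemma slice_indicator_sum:
  assumes inc: "\<forall>h<H. a h < a (Suc h)"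
  shows "(\<Sum>h<H. indicator (slice_event M Y a h) x) \<le> (2::real)"
proof -
  have "(\<Sum>h<H. indicator (slice_event M Y a h) x :: real) =
        (\<Sum>h\<in>{h. h < H \<and> x \<in> slice_event M Y a h}. 1)"
    by (simp add: sum.If_cases indicator_def Int_def lessThan_def conj_commute)
  also have "\<dots> = real (card {h. h < H \<and> x \<in> slice_event M Y a h})" by simp
  also have "\<dots> \<le> 2"
  proof -
    have "{h. h < H \<and> x \<in> slice_event M Y a h} \<subseteq> {h. h < H \<and> a h \<le> ereal (Y x) \<and> ereal (Y x) \<le> a (Suc h)}"
      by (auto simp: slice_event_def)
    then have "card {h. h < H \<and> x \<in> slice_event M Y a h} \<le> 2"
    proof -
      have "finite {h. h < H \<and> a h \<le> ereal (Y x) \<and> ereal (Y x) \<le> a (Suc h)}" by simp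
      from card_mono[OF this \<open>_ \<subseteq> _\<close>] show ?thesis using overlap_card[OF inc, of "Y x"] by linarith
    qed
    then show ?thesis by simp
  qed
  finally show ?thesis .
qed

end


context kset begin

lemma tail_small:
  assumes e: "e > 0"
  shows "\<exists>R\<ge>0. (\<integral>x. (norm (\<kappa> (Y x)))\<^sup>2 * indicator {x\<in>space M. R < \<bar>Y x\<bar>} x \<partial>M) < e"
proof -
  define s where "s n x = (norm (\<kappa> (Y x)))\<^sup>2 * indicator {x\<in>space M. real n < \<bar>Y x\<bar>} x" for n :: nat and x
  have lim: "(\<lambda>n. integral\<^sup>L M (s n)) \<longlonglongrightarrow> integral\<^sup>L M (\<lambda>x. 0)"
  proof (rule integral_dominated_convergence[where w = "\<lambda>x. (norm (\<kappa> (Y x)))\<^sup>2"])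
    show "(\<lambda>x. 0::real) \<in> borel_measurable M" by simp
    show "s n \<in> borel_measurable M" for n unfolding s_def by measurable
    show "integrable M (\<lambda>x. (norm (\<kappa> (Y x)))\<^sup>2)" by (rule f_int)
    show "AE x in M. (\<lambda>n. s n x) \<longlonglongrightarrow> 0"
    proof (rule AE_I2)
      fix x
      have "eventually (\<lambda>n. s n x = 0) sequentially"
        unfolding eventually_sequentially
      proof (intro exI allI impI)
        fix n assume "nat \<lceil>\<bar>Y x\<bar>\<rceil> \<le> n"
        then have "\<bar>Y x\<bar> \<le> real n" by linarith
        then show "s n x = 0" unfolding s_def by (simp add: indicator_def)
      qed
      then show "(\<lambda>n. s n x) \<longlonglongrightarrow> 0" by (rule tendsto_eventually)
    qed
    show "AE x in M. norm (s n x) \<le> (norm (\<kappa> (Y x)))\<^sup>2" for n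
      unfolding s_def by (intro AE_I2) (simp add: indicator_def)
  qed
  then have "eventually (\<lambda>n. integral\<^sup>L M (s n) < e) sequentially"
    using e by (intro order_tendstoD(2)) auto
  then obtain N where "integral\<^sup>L M (s N) < e" unfolding eventually_sequentially by auto
  then show ?thesis unfolding s_def by (intro exI[of _ "real N"]) auto
qed

lemma slice_sum_small:
  assumes e: "e > 0" and g: "\<gamma> > 0"
  shows "\<exists>K::nat. \<forall>H a. K \<le> H \<longrightarrow> a 0 = -\<infinity> \<longrightarrow> a H = \<infinity> \<longrightarrow> (\<forall>h<H. a h < a (Suc h)) \<longrightarrow>
     (\<forall>h<H. measure M (slice_event M Y a h) \<le> (1+\<gamma>)/real H) \<longrightarrow>
     (\<exists>v. (\<Sum>h<H. \<integral>x. indicator (slice_event M Y a h) x * (norm (\<kappa> (Y x) - v h))\<^sup>2 \<partial>M) \<le> e)"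
proof -
  define e3 where "e3 = e/3"
  define e1 where "e1 = e3/(1+\<gamma>)"
  have e3: "e3 > 0" and e1: "e1 > 0" using e g by (auto simp: e3_def e1_def)
  have e1g: "e1 * (1 + \<gamma>) = e3" using g by (simp add: e1_def)
  define f where "f x = (norm (\<kappa> (Y x)))\<^sup>2" for x
  have f_int': "integrable M f" unfolding f_def by (rule f_int)
  have f_nn: "f x \<ge> 0" for x unfolding f_def by simp
  obtain R where R0: "R \<ge> 0" and tailR: "(\<integral>x. f x * indicator {x\<in>space M. R < \<bar>Y x\<bar>} x \<partial>M) < e3/2"
    using tail_small[of "e3/2"] e3 unfolding f_def by auto
  define T where "T = {x\<in>space M. R < \<bar>Y x\<bar>}"
  have T_sets[measurable]: "T \<in> sets M" unfolding T_def by measurable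
  have "uniformly_continuous_on {-R..R} \<kappa>"
    by (rule compact_uniformly_continuous[OF continuous_on_subset[OF kc] compact_Icc]) auto
  moreover have "sqrt e1 > 0" using e1 by simp
  ultimately obtain d where d0: "d > 0" and
    d: "\<And>y y'. y \<in> {-R..R} \<Longrightarrow> y' \<in> {-R..R} \<Longrightarrow> dist y' y < d \<Longrightarrow> dist (\<kappa> y') (\<kappa> y) < sqrt e1"
    unfolding uniformly_continuous_on_def by metis
  define \<eta> where "\<eta> = d/2"
  have \<eta>0: "\<eta> > 0" using d0 by (simp add: \<eta>_def)
  have close: "(norm (\<kappa> y' - \<kappa> y))\<^sup>2 \<le> e1"
    if "y \<in> {-R..R}" "y' \<in> {-R..R}" "\<bar>y' - y\<bar> \<le> \<eta>" for y y'
  proof -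
    have "dist y' y < d" using that d0 by (simp add: dist_real_def \<eta>_def)
    then have "norm (\<kappa> y' - \<kappa> y) < sqrt e1" using d[OF that(1,2)] by (simp add: dist_norm)
    then have "(norm (\<kappa> y' - \<kappa> y))\<^sup>2 < (sqrt e1)\<^sup>2" by (intro power_strict_mono) auto
    then show ?thesis using e1 by simp
  qed
  have "bounded (\<kappa> ` {-R..R})"
    by (intro compact_imp_bounded compact_continuous_image continuous_on_subset[OF kc]) auto
  then obtain B where B0: "B > 0" and B: "\<And>y. y \<in> {-R..R} \<Longrightarrow> norm (\<kappa> y) \<le> B"
    unfolding bounded_pos by auto
  define C where "C = B\<^sup>2 * (1+\<gamma>) * (2*R/\<eta> + 2)"
  have C0: "C \<ge> 0" using B0 g R0 \<eta>0 by (simp add: C_def)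
  define K where "K = nat \<lceil>C/e3\<rceil> + 1"
  show ?thesis
  proof (intro exI[of _ K] allI impI)
    fix H :: nat and a :: "nat \<Rightarrow> ereal"
    assume HK: "K \<le> H" and a0: "a 0 = -\<infinity>" and aH: "a H = \<infinity>" and inc: "\<forall>h<H. a h < a (Suc h)"
      and pu: "\<forall>h<H. measure M (slice_event M Y a h) \<le> (1+\<gamma>)/real H"
    define A where "A h = slice_event M Y a h" for h
    have A_sets[measurable]: "A h \<in> sets M" for h unfolding A_def by simp
    have Hpos: "real H > 0" using HK by (simp add: K_def)
    have CH: "C / real H \<le> e3"
    proof -
      have "C/e3 < real K" unfolding K_def by linarith
      also have "\<dots> \<le> real H" using HK by simp
      finally have "C < e3 * real H" using e3 by (simp add: field_simps)
      then show ?thesis using Hpos by (simp add: field_simps)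
    qed
    define cl where "cl h = clampR R (a h)" for h
    define G where "G h \<longleftrightarrow> ereal (-R) \<le> a h \<and> a (Suc h) \<le> ereal R \<and> cl (Suc h) - cl h \<le> \<eta>" for h
    define v where "v h = (if G h then \<kappa> (cl h) else 0)" for h
    define Dset where "Dset = {h. h < H \<and> \<eta> < cl (Suc h) - cl h}"
    define Lset where "Lset = {h. h < H \<and> a h < ereal (-R) \<and> ereal (-R) \<le> a (Suc h)}"
    define Rset where "Rset = {h. h < H \<and> a h \<le> ereal R \<and> ereal R < a (Suc h)}"
    define E where "E = Dset \<union> Lset \<union> Rset"
    define c where "c h = (if h \<in> E then B\<^sup>2 else 0)" for h
    have c0: "c h \<ge> 0" for h by (simp add: c_def)
    have cl_range: "-R \<le> cl h \<and> cl h \<le> R" for h unfolding cl_def by (rule clampR_range[OF R0])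
    have cl_mono: "cl h \<le> cl (Suc h)" if "h < H" for h
      unfolding cl_def using inc that by (intro clampR_mono[OF R0]) auto
    have pw: "indicator (A h) x * (norm (\<kappa> (Y x) - v h))\<^sup>2
        \<le> e1 * indicator (A h) x + indicator (A h) x * (f x * indicator T x) + c h * indicator (A h) x"
      if hH: "h < H" and x: "x \<in> space M" for h x
    proof (cases "x \<in> A h")
      case False then show ?thesis by simp
    next
      case True
      then have lo: "a h \<le> ereal (Y x)" and hi: "ereal (Y x) \<le> a (Suc h)"
        by (auto simp: A_def slice_event_def)
      have rhs_ge: "e1 + f x * indicator T x + c h \<le> e1 * indicator (A h) x + indicator (A h) x * (f x * indicator T x) + c h * indicator (A h) x"
        using True by simp
      show ?thesis
      proof (cases "G h")
        case True
        then have G1: "ereal (-R) \<le> a h" "a (Suc h) \<le> ereal R" "cl (Suc h) - cl h \<le> \<eta>"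
          unfolding G_def by auto
        have "ereal (-R) \<le> ereal (Y x)" using order_trans[OF G1(1) lo] .
        moreover have "ereal (Y x) \<le> ereal R" using order_trans[OF hi G1(2)] .
        ultimately have yR: "-R \<le> Y x" "Y x \<le> R" by simp_all
        have "cl h \<le> Y x" unfolding cl_def using yR lo by (intro clampR_le)
        moreover have "Y x \<le> cl (Suc h)" unfolding cl_def using yR hi by (intro clampR_ge)
        ultimately have "\<bar>Y x - cl h\<bar> \<le> \<eta>" using G1(3) by linarith
        then have "(norm (\<kappa> (Y x) - \<kappa> (cl h)))\<^sup>2 \<le> e1"
          using yR cl_range[of h] by (intro close) auto
        then have "indicator (A h) x * (norm (\<kappa> (Y x) - v h))\<^sup>2 \<le> e1"
          using \<open>x \<in> A h\<close> True by (simp add: v_def)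
        moreover have "0 \<le> f x * indicator T x + c h" using f_nn c0 by simp
        ultimately show ?thesis using rhs_ge by linarith
      next
        case False
        then have lhs: "indicator (A h) x * (norm (\<kappa> (Y x) - v h))\<^sup>2 = f x"
          using \<open>x \<in> A h\<close> by (simp add: v_def f_def)
        show ?thesis
        proof (cases "R < \<bar>Y x\<bar>")
          case True
          then have "x \<in> T" using x by (simp add: T_def)
          then have "f x \<le> e1 + f x * indicator T x + c h" using e1 c0[of h] by simp
          then show ?thesis using lhs rhs_ge by linarith
        next
          case out: False
          then have yR: "-R \<le> Y x" "Y x \<le> R" by auto
          have "norm (\<kappa> (Y x)) \<le> B" using B yR by simp
          then have fB: "f x \<le> B\<^sup>2" unfolding f_def by (intro power_mono) auto
          have "h \<in> E"
          proof (cases "ereal (-R) \<le> a h")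
            case False
            have "ereal (-R) \<le> ereal (Y x)" using yR by simp
            from order_trans[OF this hi] have s1: "ereal (-R) \<le> a (Suc h)" .
            have s2: "a h < ereal (-R)" using False by (simp add: not_le)
            have "h \<in> Lset" unfolding Lset_def using hH s1 s2 by blast
            then show ?thesis by (simp add: E_def)
          next
            case lo': True
            show ?thesis
            proof (cases "a (Suc h) \<le> ereal R")
              case False
              have "ereal (Y x) \<le> ereal R" using yR by simp
              from order_trans[OF lo this] have s1: "a h \<le> ereal R" .
              have s2: "ereal R < a (Suc h)" using False by (simp add: not_le)
              have "h \<in> Rset" unfolding Rset_def using hH s1 s2 by blast
              then show ?thesis by (simp add: E_def)
            next
              case True
              have "\<not> cl (Suc h) - cl h \<le> \<eta>" using lo' True \<open>\<not> G h\<close> unfolding G_def by blast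
              then have "h \<in> Dset" using hH unfolding Dset_def by (simp add: not_le)
              then show ?thesis by (simp add: E_def)
            qed
          qed
          then have "f x \<le> e1 + f x * indicator T x + c h" using e1 fB f_nn[of x]
            by (simp add: c_def indicator_def)
          then show ?thesis using lhs rhs_ge by linarith
        qed
      qed
    qed
    have int_indT: "integrable M (\<lambda>x. indicator (A h) x * (f x * indicator T x))" for h
    proof -
      have "integrable M (\<lambda>x. f x * indicator T x)"
        using integrable_real_mult_indicator[OF T_sets f_int'] .
      from integrable_real_mult_indicator[OF A_sets this] show ?thesis by (simp add: mult.commute)
    qed
    have int_ind: "integrable M (\<lambda>x. indicator (A h) x :: real)" for h
      by (intro integrable_real_indicator) (auto simp: emeasure_eq_measure)
    have int_b: "integrable M (\<lambda>x. e1 * indicator (A h) x + indicator (A h) x * (f x * indicator T x) + c h * indicator (A h) x)" for h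
      using int_ind int_indT by simp
    have step1: "(\<Sum>h<H. \<integral>x. indicator (A h) x * (norm (\<kappa> (Y x) - v h))\<^sup>2 \<partial>M)
      \<le> (\<Sum>h<H. \<integral>x. e1 * indicator (A h) x + indicator (A h) x * (f x * indicator T x) + c h * indicator (A h) x \<partial>M)"
    proof (intro sum_mono integral_mono')
      fix h x assume "h \<in> {..<H}" "x \<in> space M"
      then show "indicator (A h) x * (norm (\<kappa> (Y x) - v h))\<^sup>2
        \<le> e1 * indicator (A h) x + indicator (A h) x * (f x * indicator T x) + c h * indicator (A h) x"
        using pw by simp
      show "0 \<le> e1 * indicator (A h) x + indicator (A h) x * (f x * indicator T x) + c h * indicator (A h) x"
        using e1 f_nn c0 by simp
    qed (rule int_b)
    have step2: "(\<integral>x. e1 * indicator (A h) x + indicator (A h) x * (f x * indicator T x) + c h * indicator (A h) x \<partial>M)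
       = e1 * measure M (A h) + (\<integral>x. indicator (A h) x * (f x * indicator T x) \<partial>M) + c h * measure M (A h)" for h
      using int_ind int_indT by simp
    have sumP: "(\<Sum>h<H. measure M (A h)) \<le> 1 + \<gamma>"
    proof -
      have "(\<Sum>h<H. measure M (A h)) \<le> real (card {..<H}) * ((1+\<gamma>)/real H)"
        using pu by (intro sum_bounded_above) (simp add: A_def)
      also have "\<dots> = 1 + \<gamma>" using Hpos by simp
      finally show ?thesis .
    qed
    have partA: "(\<Sum>h<H. e1 * measure M (A h)) \<le> e3"
      using mult_left_mono[OF sumP, of e1] e1 e1g by (simp add: sum_distrib_left)
    have partB: "(\<Sum>h<H. \<integral>x. indicator (A h) x * (f x * indicator T x) \<partial>M) \<le> e3"
    proof -
      have "(\<Sum>h<H. \<integral>x. indicator (A h) x * (f x * indicator T x) \<partial>M)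
          = (\<integral>x. (\<Sum>h<H. indicator (A h) x * (f x * indicator T x)) \<partial>M)"
        using Bochner_Integration.integral_sum[where I="{..<H}" and f="\<lambda>h x. indicator (A h) x * (f x * indicator T x)"] int_indT by simp
      also have "\<dots> \<le> (\<integral>x. 2 * (f x * indicator T x) \<partial>M)"
      proof (rule integral_mono')
        show "integrable M (\<lambda>x. 2 * (f x * indicator T x))"
          using integrable_real_mult_indicator[OF T_sets f_int'] by simp
        fix x assume "x \<in> space M"
        have "(\<Sum>h<H. indicator (A h) x) \<le> (2::real)"
          unfolding A_def by (rule slice_indicator_sum[OF inc])
        then have "(\<Sum>h<H. indicator (A h) x) * (f x * indicator T x) \<le> 2 * (f x * indicator T x)"
          using f_nn[of x] by (intro mult_right_mono) auto
        then show "(\<Sum>h<H. indicator (A h) x * (f x * indicator T x)) \<le> 2 * (f x * indicator T x)"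
          by (simp only: sum_distrib_right)
        show "0 \<le> 2 * (f x * indicator T x)" using f_nn[of x] by simp
      qed
      also have "\<dots> \<le> e3" using tailR unfolding T_def by simp
      finally show ?thesis .
    qed
    have cardD: "real (card Dset) \<le> 2 * R / \<eta>"
    proof -
      have finD: "finite Dset" unfolding Dset_def by simp
      have "real (card Dset) * \<eta> \<le> (\<Sum>h\<in>Dset. cl (Suc h) - cl h)"
        by (intro sum_bounded_below) (auto simp: Dset_def)
      also have "\<dots> \<le> (\<Sum>h<H. cl (Suc h) - cl h)"
        by (intro sum_mono2) (auto simp: Dset_def cl_mono)
      also have "\<dots> = cl H - cl 0" by (rule sum_lessThan_telescope)
      also have "\<dots> = 2 * R" using a0 aH R0 by (simp add: cl_def clampR_minf clampR_inf)
      finally show ?thesis using \<eta>0 by (simp add: field_simps)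
    qed
    have cardE: "real (card E) \<le> 2 * R / \<eta> + 2"
    proof -
      have "card E \<le> card Dset + card Lset + card Rset"
        unfolding E_def using card_Un_le[of "Dset \<union> Lset" Rset] card_Un_le[of Dset Lset] by linarith
      moreover have "card Lset \<le> 1" unfolding Lset_def by (rule cross_lo_card[OF inc])
      moreover have "card Rset \<le> 1" unfolding Rset_def by (rule cross_hi_card[OF inc])
      ultimately have "real (card E) \<le> real (card Dset) + 2" by linarith
      then show ?thesis using cardD by linarith
    qed
    have partC: "(\<Sum>h<H. c h * measure M (A h)) \<le> e3"
    proof -
      have "(\<Sum>h<H. c h * measure M (A h)) \<le> (\<Sum>h<H. c h * ((1+\<gamma>)/real H))"
        using pu c0 by (intro sum_mono mult_left_mono) (auto simp: A_def)
      also have "\<dots> = ((1+\<gamma>)/real H) * (\<Sum>h<H. c h)" by (simp add: sum_distrib_left sum_divide_distrib mult.commute)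
      also have "(\<Sum>h<H. c h) = B\<^sup>2 * real (card E)"
      proof -
        have EH: "E \<subseteq> {..<H}" by (auto simp: E_def Dset_def Lset_def Rset_def)
        have "(\<Sum>h<H. c h) = (\<Sum>h\<in>{..<H} \<inter> E. B\<^sup>2)"
          unfolding c_def by (rule sum.inter_restrict[symmetric]) simp
        also have "{..<H} \<inter> E = E" using EH by blast
        finally show ?thesis by simp
      qed
      also have "((1+\<gamma>)/real H) * (B\<^sup>2 * real (card E)) \<le> ((1+\<gamma>)/real H) * (B\<^sup>2 * (2 * R / \<eta> + 2))"
        using cardE g Hpos by (intro mult_left_mono) auto
      also have "\<dots> = C / real H" using \<eta>0 by (simp add: C_def field_simps)
      finally show ?thesis using CH by linarith
    qed
    show "\<exists>v. (\<Sum>h<H. \<integral>x. indicator (slice_event M Y a h) x * (norm (\<kappa> (Y x) - v h))\<^sup>2 \<partial>M) \<le> e"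
    proof (intro exI[of _ v])
      have "(\<Sum>h<H. \<integral>x. indicator (A h) x * (norm (\<kappa> (Y x) - v h))\<^sup>2 \<partial>M)
        \<le> (\<Sum>h<H. e1 * measure M (A h)) + (\<Sum>h<H. \<integral>x. indicator (A h) x * (f x * indicator T x) \<partial>M) + (\<Sum>h<H. c h * measure M (A h))"
        using step1 by (simp add: step2 sum.distrib)
      also have "\<dots> \<le> e" using partA partB partC by (simp add: e3_def)
      finally show "(\<Sum>h<H. \<integral>x. indicator (slice_event M Y a h) x * (norm (\<kappa> (Y x) - v h))\<^sup>2 \<partial>M) \<le> e"
        by (simp add: A_def)
    qed
  qed
qed

end


context kset begin

definition "muv = (\<chi> i. expectation (\<lambda>x. \<kappa> (Y x) $ i))"
definition "Cov i j = expectation (\<lambda>x. (\<kappa> (Y x) $ i - muv $ i) * (\<kappa> (Y x) $ j - muv $ j))"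

lemma comp_int: "integrable M (\<lambda>x. \<kappa> (Y x) $ i)"
  by (rule integrable_from_sq[OF comp_meas comp_sq_int])

lemma expect_inner: "expectation (\<lambda>x. \<beta> \<bullet> \<kappa> (Y x)) = \<beta> \<bullet> muv"
proof -
  have "expectation (\<lambda>x. \<beta> \<bullet> \<kappa> (Y x)) = expectation (\<lambda>x. \<Sum>i\<in>UNIV. \<beta> $ i * \<kappa> (Y x) $ i)"
    by (simp add: inner_vec_def)
  also have "\<dots> = (\<Sum>i\<in>UNIV. \<beta> $ i * expectation (\<lambda>x. \<kappa> (Y x) $ i))"
    using comp_int by simp
  also have "\<dots> = \<beta> \<bullet> muv" by (simp add: inner_vec_def muv_def)
  finally show ?thesis .
qed

lemma Zb_int: "integrable M (\<lambda>x. \<beta> \<bullet> \<kappa> (Y x))"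
  by (rule integrable_from_sq[OF _ Zb_sq_int]) measurable

lemma prod_int: "integrable M (\<lambda>x. (\<kappa> (Y x) $ i - muv $ i) * (\<kappa> (Y x) $ j - muv $ j))"
proof (rule Bochner_Integration.integrable_bound)
  show "integrable M (\<lambda>x. (norm (\<kappa> (Y x) - muv))\<^sup>2)" by (rule diff_sq_int)
  show "(\<lambda>x. (\<kappa> (Y x) $ i - muv $ i) * (\<kappa> (Y x) $ j - muv $ j)) \<in> borel_measurable M" by measurable
  show "AE x in M. norm ((\<kappa> (Y x) $ i - muv $ i) * (\<kappa> (Y x) $ j - muv $ j)) \<le> norm ((norm (\<kappa> (Y x) - muv))\<^sup>2)"
  proof (rule AE_I2)
    fix x
    have "\<bar>(\<kappa> (Y x) - muv) $ i\<bar> \<le> norm (\<kappa> (Y x) - muv)" "\<bar>(\<kappa> (Y x) - muv) $ j\<bar> \<le> norm (\<kappa> (Y x) - muv)"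
      by (rule component_le_norm_cart)+
    then have "\<bar>(\<kappa> (Y x) - muv) $ i\<bar> * \<bar>(\<kappa> (Y x) - muv) $ j\<bar> \<le> norm (\<kappa> (Y x) - muv) * norm (\<kappa> (Y x) - muv)"
      by (intro mult_mono) auto
    then show "norm ((\<kappa> (Y x) $ i - muv $ i) * (\<kappa> (Y x) $ j - muv $ j)) \<le> norm ((norm (\<kappa> (Y x) - muv))\<^sup>2)"
      by (simp add: abs_mult power2_eq_square)
  qed
qed

lemma var_expand: "variance (\<lambda>x. \<beta> \<bullet> \<kappa> (Y x)) = (\<Sum>i\<in>UNIV. \<Sum>j\<in>UNIV. \<beta> $ i * \<beta> $ j * Cov i j)"
proof -
  have "variance (\<lambda>x. \<beta> \<bullet> \<kappa> (Y x)) = expectation (\<lambda>x. (\<beta> \<bullet> \<kappa> (Y x) - \<beta> \<bullet> muv)\<^sup>2)"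
    by (simp add: expect_inner)
  also have "\<dots> = expectation (\<lambda>x. \<Sum>i\<in>UNIV. \<Sum>j\<in>UNIV. \<beta> $ i * \<beta> $ j *
      ((\<kappa> (Y x) $ i - muv $ i) * (\<kappa> (Y x) $ j - muv $ j)))"
  proof (rule arg_cong[where f = expectation], rule ext)
    fix x
    have "\<beta> \<bullet> \<kappa> (Y x) - \<beta> \<bullet> muv = (\<Sum>i\<in>UNIV. \<beta> $ i * (\<kappa> (Y x) $ i - muv $ i))"
      by (simp add: inner_vec_def sum_subtractf right_diff_distrib)
    then show "(\<beta> \<bullet> \<kappa> (Y x) - \<beta> \<bullet> muv)\<^sup>2 = (\<Sum>i\<in>UNIV. \<Sum>j\<in>UNIV. \<beta> $ i * \<beta> $ j *
      ((\<kappa> (Y x) $ i - muv $ i) * (\<kappa> (Y x) $ j - muv $ j)))"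
      by (simp add: power2_eq_square sum_product mult_ac)
  qed
  also have "\<dots> = (\<Sum>i\<in>UNIV. \<Sum>j\<in>UNIV. \<beta> $ i * \<beta> $ j * Cov i j)"
    using prod_int by (simp add: Cov_def)
  finally show ?thesis .
qed

lemma var_cont: "continuous_on S (\<lambda>\<beta>. variance (\<lambda>x. \<beta> \<bullet> \<kappa> (Y x)))"
  unfolding var_expand by (intro continuous_intros)

lemma var_nonneg: "variance (\<lambda>x. \<beta> \<bullet> \<kappa> (Y x)) \<ge> 0"
  by (simp add: integral_nonneg_AE)

lemma var_scale: "variance (\<lambda>x. (t *\<^sub>R \<beta>) \<bullet> \<kappa> (Y x)) = t\<^sup>2 * variance (\<lambda>x. \<beta> \<bullet> \<kappa> (Y x))"
  unfolding var_expand by (simp add: sum_distrib_left mult_ac power2_eq_square)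

definition "Vs = {\<beta>. \<exists>c. AE x in M. \<beta> \<bullet> \<kappa> (Y x) = c}"

lemma Vs_iff: "\<beta> \<in> Vs \<longleftrightarrow> (\<exists>c. AE x in M. \<beta> \<bullet> \<kappa> (Y x) = c)"
  by (simp add: Vs_def)

lemma Vs_subspace: "subspace Vs"
proof -
  have "0 \<in> Vs" unfolding Vs_iff by (intro exI[of _ 0]) simp
  moreover have "u + w \<in> Vs" if "u \<in> Vs" "w \<in> Vs" for u w
  proof -
    from that(1)[unfolded Vs_iff] obtain c1 where c1: "AE x in M. u \<bullet> \<kappa> (Y x) = c1" ..
    from that(2)[unfolded Vs_iff] obtain c2 where c2: "AE x in M. w \<bullet> \<kappa> (Y x) = c2" ..
    from c1 c2
    have "AE x in M. (u + w) \<bullet> \<kappa> (Y x) = c1 + c2" by eventually_elim (simp add: inner_add_left)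
    then show ?thesis unfolding Vs_iff by blast
  qed
  moreover have "t *\<^sub>R u \<in> Vs" if "u \<in> Vs" for u t
  proof -
    from that[unfolded Vs_iff] obtain c1 where "AE x in M. u \<bullet> \<kappa> (Y x) = c1" ..
    then have "AE x in M. (t *\<^sub>R u) \<bullet> \<kappa> (Y x) = t * c1" by eventually_elim simp
    then show ?thesis unfolding Vs_iff by blast
  qed
  ultimately show ?thesis unfolding subspace_def by blast
qed

lemma var_zero_Vs: assumes "variance (\<lambda>x. \<beta> \<bullet> \<kappa> (Y x)) = 0" shows "\<beta> \<in> Vs"
proof -
  define E where "E = expectation (\<lambda>x. \<beta> \<bullet> \<kappa> (Y x))"
  have int: "integrable M (\<lambda>x. (\<beta> \<bullet> \<kappa> (Y x) - E)\<^sup>2)"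
  proof -
    have "(\<lambda>x. (\<beta> \<bullet> \<kappa> (Y x) - E)\<^sup>2) = (\<lambda>x. (\<beta> \<bullet> (\<kappa> (Y x) - ((E / (\<beta> \<bullet> \<beta>)) *\<^sub>R \<beta>)))\<^sup>2)" if "\<beta> \<noteq> 0"
      using that by (simp add: inner_diff_right)
    moreover have "integrable M (\<lambda>x. (\<beta> \<bullet> \<kappa> (Y x) - E)\<^sup>2)" if "\<beta> = 0"
      using that by simp
    ultimately show ?thesis using inner_sq_int by (cases "\<beta> = 0") auto
  qed
  have "AE x in M. (\<beta> \<bullet> \<kappa> (Y x) - E)\<^sup>2 = 0"
    using assms integral_nonneg_eq_0_iff_AE[OF int] by (simp add: E_def)
  then have "AE x in M. \<beta> \<bullet> \<kappa> (Y x) = E" by eventually_elim simp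
  then show ?thesis unfolding Vs_def by auto
qed

lemma var_shift:
  assumes b0: "\<beta>0 \<in> Vs"
  shows "variance (\<lambda>x. (\<beta>1 + \<beta>0) \<bullet> \<kappa> (Y x)) = variance (\<lambda>x. \<beta>1 \<bullet> \<kappa> (Y x))"
proof -
  obtain c0 where c0: "AE x in M. \<beta>0 \<bullet> \<kappa> (Y x) = c0" using b0 unfolding Vs_def by auto
  have ex: "expectation (\<lambda>x. (\<beta>1 + \<beta>0) \<bullet> \<kappa> (Y x)) = expectation (\<lambda>x. \<beta>1 \<bullet> \<kappa> (Y x)) + c0"
  proof -
    have "expectation (\<lambda>x. (\<beta>1 + \<beta>0) \<bullet> \<kappa> (Y x)) = expectation (\<lambda>x. \<beta>1 \<bullet> \<kappa> (Y x) + c0)"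
      by (rule integral_cong_AE) (use c0 in \<open>auto simp: inner_add_left\<close>)
    also have "\<dots> = expectation (\<lambda>x. \<beta>1 \<bullet> \<kappa> (Y x)) + c0" using Zb_int by (simp add: prob_space)
    finally show ?thesis .
  qed
  show ?thesis unfolding ex
    by (rule integral_cong_AE) (use c0 in \<open>auto simp: inner_add_left\<close>)
qed

end


context kset begin

lemma condvar_bound:
  assumes A: "A \<in> sets M" and pA: "prob A > 0" and b0: "\<beta>0 \<in> Vs"
  shows "cond_var_event M (\<lambda>x. (\<beta>1 + \<beta>0) \<bullet> \<kappa> (Y x)) A
     \<le> (norm \<beta>1)\<^sup>2 * (\<integral>x. indicator A x * (norm (\<kappa> (Y x) - v))\<^sup>2 \<partial>M) / prob A"
proof -
  note A[measurable]
  from b0[unfolded Vs_iff] obtain c0 where c0: "AE x in M. \<beta>0 \<bullet> \<kappa> (Y x) = c0" ..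
  define c where "c = \<beta>1 \<bullet> v + c0"
  have "cond_var_event M (\<lambda>x. (\<beta>1 + \<beta>0) \<bullet> \<kappa> (Y x)) A
      \<le> (\<integral>x. indicator A x * ((\<beta>1 + \<beta>0) \<bullet> \<kappa> (Y x) - c)\<^sup>2 \<partial>M) / prob A"
    by (rule cond_var_le[OF A pA]) (measurable, rule Zb_sq_int)
  also have "(\<integral>x. indicator A x * ((\<beta>1 + \<beta>0) \<bullet> \<kappa> (Y x) - c)\<^sup>2 \<partial>M)
      = (\<integral>x. indicator A x * (\<beta>1 \<bullet> (\<kappa> (Y x) - v))\<^sup>2 \<partial>M)"
  proof (rule integral_cong_AE)
    show "(\<lambda>x. indicator A x * ((\<beta>1 + \<beta>0) \<bullet> \<kappa> (Y x) - c)\<^sup>2) \<in> borel_measurable M" by measurable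
    show "(\<lambda>x. indicator A x * (\<beta>1 \<bullet> (\<kappa> (Y x) - v))\<^sup>2) \<in> borel_measurable M" by measurable
    show "AE x in M. indicator A x * ((\<beta>1 + \<beta>0) \<bullet> \<kappa> (Y x) - c)\<^sup>2 = indicator A x * (\<beta>1 \<bullet> (\<kappa> (Y x) - v))\<^sup>2"
      using c0 by eventually_elim (simp add: c_def inner_add_left inner_diff_right)
  qed
  also have "\<dots> \<le> (\<integral>x. (norm \<beta>1)\<^sup>2 * (indicator A x * (norm (\<kappa> (Y x) - v))\<^sup>2) \<partial>M)"
  proof (rule integral_mono')
    show "integrable M (\<lambda>x. (norm \<beta>1)\<^sup>2 * (indicator A x * (norm (\<kappa> (Y x) - v))\<^sup>2))"
      using integrable_real_mult_indicator[OF A diff_sq_int[of v]] by (simp add: mult.commute)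
    fix x
    show "indicator A x * (\<beta>1 \<bullet> (\<kappa> (Y x) - v))\<^sup>2 \<le> (norm \<beta>1)\<^sup>2 * (indicator A x * (norm (\<kappa> (Y x) - v))\<^sup>2)"
      using inner_sq_le[of \<beta>1 "\<kappa> (Y x) - v"] by (simp add: indicator_def)
    show "0 \<le> (norm \<beta>1)\<^sup>2 * (indicator A x * (norm (\<kappa> (Y x) - v))\<^sup>2)" by simp
  qed
  also have "\<dots> = (norm \<beta>1)\<^sup>2 * (\<integral>x. indicator A x * (norm (\<kappa> (Y x) - v))\<^sup>2 \<partial>M)"
    by simp
  finally show ?thesis using pA by (simp add: divide_right_mono)
qed

theorem kset_main:
  assumes g: "0 < \<gamma>" "\<gamma> < 1" and \<tau>: "\<tau> > 1"
  shows "\<exists>K. K \<ge> d \<and> weak_sliced_stable \<gamma> M Y \<kappa> K \<tau>"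
proof -
  define var where "var \<beta> = variance (\<lambda>x. \<beta> \<bullet> \<kappa> (Y x))" for \<beta>
  define W where "W = {u. \<forall>x\<in>Vs. orthogonal x u}"
  have subW: "subspace W" unfolding W_def by (rule subspace_orthogonal_to_vectors)
  define S where "S = sphere (0::real^'p) 1 \<inter> W"
  have cS: "compact S" unfolding S_def
    by (rule compact_Int_closed[OF compact_sphere closed_subspace[OF subW]])
  obtain m where m0: "m > 0" and mS: "\<And>u. u \<in> S \<Longrightarrow> m \<le> var u"
  proof (cases "S = {}")
    case True then show ?thesis using that[of 1] by auto
  next
    case False
    from continuous_attains_inf[OF cS False var_cont[of S]]
    obtain u0 where u0: "u0 \<in> S" and min: "\<And>u. u \<in> S \<Longrightarrow> var u0 \<le> var u"
      unfolding var_def by auto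
    have "var u0 \<noteq> 0"
    proof
      assume "var u0 = 0"
      then have "u0 \<in> Vs" unfolding var_def by (rule var_zero_Vs)
      moreover have "u0 \<in> W" using u0 by (simp add: S_def)
      ultimately have "u0 \<bullet> u0 = 0" unfolding W_def orthogonal_def by auto
      then have "u0 = 0" by simp
      then show False using u0 by (simp add: S_def)
    qed
    moreover have "var u0 \<ge> 0" unfolding var_def by (rule var_nonneg)
    ultimately show ?thesis using that[of "var u0"] min by auto
  qed
  have varW: "m * (norm z)\<^sup>2 \<le> var z" if zW: "z \<in> W" for z
  proof (cases "z = 0")
    case True then show ?thesis using var_nonneg unfolding var_def by simp
  next
    case False
    define u where "u = (1 / norm z) *\<^sub>R z"
    have "u \<in> S" using zW False subspace_scale[OF subW zW] by (simp add: S_def u_def)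
    then have "m \<le> var u" by (rule mS)
    have zu: "z = norm z *\<^sub>R u" using False by (simp add: u_def)
    have "var (norm z *\<^sub>R u) = (norm z)\<^sup>2 * var u" unfolding var_def by (rule var_scale)
    then have "var z = (norm z)\<^sup>2 * var u" using zu by simp
    then show ?thesis using \<open>m \<le> var u\<close> by (simp add: mult_right_mono mult.commute)
  qed
  define e where "e = m * (1 - \<gamma>) / \<tau>"
  have e0: "e > 0" using m0 g \<tau> by (simp add: e_def)
  obtain K0 where K0: "\<forall>H a. K0 \<le> H \<longrightarrow> a 0 = -\<infinity> \<longrightarrow> a H = \<infinity> \<longrightarrow> (\<forall>h<H. a h < a (Suc h)) \<longrightarrow>
     (\<forall>h<H. measure M (slice_event M Y a h) \<le> (1+\<gamma>)/real H) \<longrightarrow>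
     (\<exists>v. (\<Sum>h<H. \<integral>x. indicator (slice_event M Y a h) x * (norm (\<kappa> (Y x) - v h))\<^sup>2 \<partial>M) \<le> e)"
    using slice_sum_small[OF e0 g(1)] by blast
  show ?thesis
  proof (intro exI[of _ "max K0 d"] conjI)
    show "d \<le> max K0 d" by simp
    show "weak_sliced_stable \<gamma> M Y \<kappa> (max K0 d) \<tau>"
      unfolding weak_sliced_stable_def
    proof (intro allI impI)
      fix H :: nat and a :: "nat \<Rightarrow> ereal" and \<beta> :: "real^'p"
      assume hyp: "max K0 d \<le> H \<and> a 0 = - \<infinity> \<and> a H = \<infinity> \<and> (\<forall>h<H. a h < a (Suc h)) \<and>
         (\<forall>h<H. (1 - \<gamma>) / real H \<le> measure M (slice_event M Y a h) \<and>
                measure M (slice_event M Y a h) \<le> (1 + \<gamma>) / real H)"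
      assume "norm \<beta> = 1"
      define A where "A h = slice_event M Y a h" for h
      have HK: "K0 \<le> H" using hyp by simp
      have Hpos: "real H > 0"
      proof -
        have aH': "a H = \<infinity>" and a0': "a 0 = - \<infinity>" using hyp by blast+
        have "H \<noteq> 0"
        proof
          assume "H = 0"
          then show False using aH' a0' by simp
        qed
        then show ?thesis by simp
      qed
      have pl: "(1 - \<gamma>) / real H \<le> prob (A h)" and pu: "prob (A h) \<le> (1 + \<gamma>) / real H" if "h < H" for h
        using hyp that by (auto simp: A_def)
      have ppos: "prob (A h) > 0" if "h < H" for h
        using pl[OF that] g Hpos by (smt (verit) divide_pos_pos)
      obtain v where v: "(\<Sum>h<H. \<integral>x. indicator (A h) x * (norm (\<kappa> (Y x) - v h))\<^sup>2 \<partial>M) \<le> e"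
        using K0 HK hyp unfolding A_def by blast
      define J where "J h = (\<integral>x. indicator (A h) x * (norm (\<kappa> (Y x) - v h))\<^sup>2 \<partial>M)" for h
      have J0: "J h \<ge> 0" for h unfolding J_def by (intro integral_nonneg_AE) auto
      obtain y z where y: "y \<in> span Vs" and z: "\<And>w. w \<in> span Vs \<Longrightarrow> orthogonal z w" and bz: "\<beta> = y + z"
        by (rule orthogonal_subspace_decomp_exists[of Vs \<beta>]) blast
      have yV: "y \<in> Vs" using y Vs_subspace by (metis span_eq_iff)
      have zW: "z \<in> W" unfolding W_def using z span_superset by (auto simp: orthogonal_commute)
      have bzy: "\<beta> = z + y" using bz by simp
      have "(1 / real H) * (\<Sum>h<H. cond_var_event M (\<lambda>x. \<beta> \<bullet> \<kappa> (Y x)) (A h))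
          \<le> (1 / real H) * (\<Sum>h<H. (norm z)\<^sup>2 * J h / prob (A h))"
        unfolding bzy J_def using Hpos ppos slice_sets[of a] unfolding A_def
        by (intro mult_left_mono sum_mono condvar_bound[OF _ _ yV]) auto
      also have "\<dots> = (\<Sum>h<H. (norm z)\<^sup>2 * J h / (real H * prob (A h)))"
        by (simp add: sum_distrib_left)
      also have "\<dots> \<le> (\<Sum>h<H. (norm z)\<^sup>2 * J h / (1 - \<gamma>))"
      proof (intro sum_mono divide_left_mono)
        fix h assume "h \<in> {..<H}"
        then have "(1 - \<gamma>) / real H \<le> prob (A h)" by (intro pl) simp
        then show "1 - \<gamma> \<le> real H * prob (A h)" using Hpos by (simp add: field_simps)
        show "0 \<le> (norm z)\<^sup>2 * J h" using J0 by simp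
        show "0 < real H * prob (A h) * (1 - \<gamma>)" using Hpos ppos \<open>h \<in> {..<H}\<close> g by simp
      qed
      also have "\<dots> = (norm z)\<^sup>2 / (1 - \<gamma>) * (\<Sum>h<H. J h)"
        by (simp add: sum_distrib_left sum_divide_distrib)
      also have "\<dots> \<le> (norm z)\<^sup>2 / (1 - \<gamma>) * e"
        using v g by (intro mult_left_mono) (auto simp: J_def)
      also have "\<dots> = (1 / \<tau>) * (m * (norm z)\<^sup>2)" using g \<tau> by (simp add: e_def field_simps)
      also have "\<dots> \<le> (1 / \<tau>) * var z" using varW[OF zW] \<tau> by (intro mult_left_mono) auto
      also have "var z = variance (\<lambda>x. \<beta> \<bullet> \<kappa> (Y x))"
        unfolding var_def bzy by (rule var_shift[OF yV, symmetric])
      finally show "1 / real H * (\<Sum>h<H. cond_var_event M (\<lambda>x. \<beta> \<bullet> \<kappa> (Y x)) (slice_event M Y a h))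
           \<le> 1 / \<tau> * variance (\<lambda>x. \<beta> \<bullet> \<kappa> (Y x))" by (simp add: A_def)
    qed
  qed
qed

end

theorem mainTheorem10:
  fixes \<gamma> :: real and M :: "'a measure" and Y :: "'a \<Rightarrow> real"
    and \<kappa> :: "real \<Rightarrow> real ^ 'p" and l c1 :: real
  assumes "0 < \<gamma>" and "\<gamma> < 1"
    and "prob_space M"
    and "Y \<in> borel_measurable M"
    and "continuous_on UNIV \<kappa>"
    and "\<exists>y. \<kappa> y \<noteq> 0"
    and "l > 2" and "c1 > 0"
    and "\<And>\<beta>. norm \<beta> = 1 \<Longrightarrow> integrable M (\<lambda>x. \<bar>\<kappa> (Y x) \<bullet> \<beta>\<bar> powr l)"
    and "\<And>\<beta>. norm \<beta> = 1 \<Longrightarrow> (\<integral>x. \<bar>\<kappa> (Y x) \<bullet> \<beta>\<bar> powr l \<partial>M) \<le> c1"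
    and "absolutely_continuous lborel (distr M lborel Y)"
  shows "\<forall>\<tau>>1. \<exists>K::nat. K \<ge> dim (span (range \<kappa>)) \<and> weak_sliced_stable \<gamma> M Y \<kappa> K \<tau>"
proof -
  interpret kset M Y \<kappa> l
    by (rule kset.intro[OF assms(3)], unfold_locales) (use assms in auto)
  show ?thesis using kset_main[OF assms(1,2)] by blast
qed


end
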